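(* Let $X=\omega\times\omega$, and let $I$ and $J$ be the ideals on $X$ defined below. Then $\mathscr C_J$ covers $\mathscr C_I$ in the lattice of clones on $X$: we have $\mathscr C_I\subsetneq \mathscr C_J$, and there is no clone $\mathscr D$ on $X$ with $\mathscr C_I\subsetneq\mathscr D\subsetneq\mathscr C_J$. Equivalently, for every $f\in\mathscr C_J\setminus\mathscr C_I$, the clone generated by $\{f\}\cup\mathscr C_I$ equals $\mathscr C_J$.
   Context: A clone on a set $X$ is a set of finitary operations on $X$ containing all projections $\pi^n_k(x_1,\dots,x_n)=x_k$ and closed under composition; clones ordered by inclusion form a lattice. Write elements of $X=\omega\times\omega$ as $(a|b)$, with $a$ the $x$-coordinate and $b$ the $y$-coordinate. Sets of the form $\omega\times\{n\}$ are called lines. The width of $Y\subseteq X$ is $\sup\{|Y\cap(\omega\times\{n\})|:n\in\omega\}$. $I$ is the ideal of all subsets of $X$ of finite width; $J$ is the ideal of all subsets of $X$ whose intersection with every line is finite. For an ideal $K$ on $X$, $\mathscr C_K$ is the set of all finitary operations $f:X^n\to X$ ($n\ge1$) such that $f[A^n]\in K$ for all $A\in K$. *)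

theory Defs
  imports Main
begin

text \<open>The base set X = omega x omega; the point (a|b) is the pair (a, b),
  a the x-coordinate, b the y-coordinate.\<close>
type_synonym pt = "nat \<times> nat"

text \<open>An n-ary operation on X is represented as a pair (n, f) where
  f :: (nat \<Rightarrow> pt) \<Rightarrow> pt only depends on the arguments with index < n;
  this makes the representation canonical (one pair per genuine function X^n \<rightarrow> X).\<close>
type_synonym op = "nat \<times> ((nat \<Rightarrow> pt) \<Rightarrow> pt)"

definition is_op :: "op \<Rightarrow> bool" where
  "is_op p \<longleftrightarrow> fst p \<ge> 1 \<and>
     (\<forall>a b. (\<forall>i < fst p. a i = b i) \<longrightarrow> snd p a = snd p b)"

definition proj :: "nat \<Rightarrow> nat \<Rightarrow> op" where
  "proj n k = (n, \<lambda>a. a k)"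

definition comp_op :: "op \<Rightarrow> nat \<Rightarrow> (nat \<Rightarrow> op) \<Rightarrow> op" where
  "comp_op f m g = (m, \<lambda>a. snd f (\<lambda>i. snd (g i) a))"

definition is_clone :: "op set \<Rightarrow> bool" where
  "is_clone C \<longleftrightarrow> (\<forall>p\<in>C. is_op p)
     \<and> (\<forall>n k. 1 \<le> n \<and> k < n \<longrightarrow> proj n k \<in> C)
     \<and> (\<forall>f\<in>C. \<forall>m g. 1 \<le> m \<and> (\<forall>i < fst f. g i \<in> C \<and> fst (g i) = m)
              \<longrightarrow> comp_op f m g \<in> C)"

definition line :: "nat \<Rightarrow> pt set" where
  "line n = {p. snd p = n}"

definition finite_width :: "pt set \<Rightarrow> bool" where
  "finite_width Y \<longleftrightarrow> (\<exists>k::nat. \<forall>n. finite (Y \<inter> line n) \<and> card (Y \<inter> line n) \<le> k)"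

definition idealI :: "pt set set" where
  "idealI = {Y. finite_width Y}"

definition idealJ :: "pt set set" where
  "idealJ = {Y. \<forall>n. finite (Y \<inter> line n)}"

definition op_image :: "op \<Rightarrow> pt set \<Rightarrow> pt set" where
  "op_image f A = {snd f a | a. \<forall>i < fst f. a i \<in> A}"

definition clone_of_ideal :: "pt set set \<Rightarrow> op set" where
  "clone_of_ideal K = {f. is_op f \<and> (\<forall>A\<in>K. op_image f A \<in> K)}"

end

theory Submission
  imports Defs "HOL-Library.Countable"
begin


lemma finite_width_mono: "finite_width Z \<Longrightarrow> Y \<subseteq> Z \<Longrightarrow> finite_width Y"
  unfolding finite_width_def
proof -
  assume "\<exists>k. \<forall>n. finite (Z \<inter> line n) \<and> card (Z \<inter> line n) \<le> k" and s: "Y \<subseteq> Z"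
  then obtain k where k: "\<forall>n. finite (Z \<inter> line n) \<and> card (Z \<inter> line n) \<le> k" by blast
  have "\<forall>n. finite (Y \<inter> line n) \<and> card (Y \<inter> line n) \<le> k"
  proof
    fix n
    have sub: "Y \<inter> line n \<subseteq> Z \<inter> line n" using s by blast
    show "finite (Y \<inter> line n) \<and> card (Y \<inter> line n) \<le> k"
      using k sub by (meson card_mono finite_subset le_trans)
  qed
  then show "\<exists>k. \<forall>n. finite (Y \<inter> line n) \<and> card (Y \<inter> line n) \<le> k" by blast
qed

lemma finite_width_Un: "finite_width Y \<Longrightarrow> finite_width Z \<Longrightarrow> finite_width (Y \<union> Z)"
proof -
  assume "finite_width Y" "finite_width Z"
  then obtain k1 k2 where k1: "\<forall>n. finite (Y \<inter> line n) \<and> card (Y \<inter> line n) \<le> k1"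
    and k2: "\<forall>n. finite (Z \<inter> line n) \<and> card (Z \<inter> line n) \<le> k2"
    unfolding finite_width_def by blast
  have "\<forall>n. finite ((Y \<union> Z) \<inter> line n) \<and> card ((Y \<union> Z) \<inter> line n) \<le> k1 + k2"
  proof
    fix n
    have e: "(Y \<union> Z) \<inter> line n = (Y \<inter> line n) \<union> (Z \<inter> line n)" by blast
    show "finite ((Y \<union> Z) \<inter> line n) \<and> card ((Y \<union> Z) \<inter> line n) \<le> k1 + k2"
      unfolding e using k1 k2 card_Un_le[of "Y \<inter> line n" "Z \<inter> line n"]
      by (meson add_mono finite_UnI le_trans)
  qed
  then show ?thesis unfolding finite_width_def by blast
qed

lemma op_imageI: "(\<And>i. i < fst F \<Longrightarrow> a i \<in> X) \<Longrightarrow> snd F a \<in> op_image F X"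
  unfolding op_image_def by blast

lemma op_imageE: "y \<in> op_image F X \<Longrightarrow> (\<And>a. (\<forall>i<fst F. a i \<in> X) \<Longrightarrow> y = snd F a \<Longrightarrow> P) \<Longrightarrow> P"
  unfolding op_image_def by blast

lemma I_sub_J: "idealI \<subseteq> idealJ"
  unfolding idealI_def idealJ_def finite_width_def by blast

definition ideal_like :: "pt set set \<Rightarrow> bool" where
  "ideal_like K \<longleftrightarrow> {} \<in> K \<and> (\<forall>A\<in>K. \<forall>B. B \<subseteq> A \<longrightarrow> B \<in> K) \<and> (\<forall>A\<in>K. \<forall>B\<in>K. A \<union> B \<in> K)"

lemma ideal_like_I: "ideal_like idealI"
proof -
  have "finite_width {}" unfolding finite_width_def by simp
  then show ?thesis unfolding ideal_like_def idealI_def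
    using finite_width_mono finite_width_Un by blast
qed

lemma ideal_like_J: "ideal_like idealJ"
  unfolding ideal_like_def idealJ_def
  by (auto simp: Int_Un_distrib2 intro: finite_subset[of _ "_ \<inter> line _"])

lemma ideal_like_UN:
  assumes K: "ideal_like K" and h: "\<forall>i<(n::nat). B i \<in> K"
  shows "(\<Union>i<n. B i) \<in> K"
  using h
proof (induction n)
  case 0 then show ?case using K unfolding ideal_like_def by simp
next
  case (Suc n)
  have e: "(\<Union>i<Suc n. B i) = (\<Union>i<n. B i) \<union> B n" by (auto simp: lessThan_Suc)
  show ?case unfolding e using Suc K unfolding ideal_like_def by simp
qed

lemma is_clone_ideal:
  assumes K: "ideal_like K"
  shows "is_clone (clone_of_ideal K)"
proof -
  have K1: "\<And>A B. A \<in> K \<Longrightarrow> B \<subseteq> A \<Longrightarrow> B \<in> K" using K unfolding ideal_like_def by blast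
  have A1: "\<forall>p\<in>clone_of_ideal K. is_op p" by (simp add: clone_of_ideal_def)
  have A2: "\<forall>n k. 1 \<le> n \<and> k < n \<longrightarrow> proj n k \<in> clone_of_ideal K"
  proof (intro allI impI)
    fix n k :: nat assume nk: "1 \<le> n \<and> k < n"
    have op: "is_op (proj n k)" using nk unfolding is_op_def proj_def by simp
    have "\<forall>A\<in>K. op_image (proj n k) A \<in> K"
    proof
      fix A assume A: "A \<in> K"
      have "op_image (proj n k) A \<subseteq> A"
      proof
        fix y assume "y \<in> op_image (proj n k) A"
        then obtain a where "\<forall>i<n. a i \<in> A" "y = a k" unfolding op_image_def proj_def by auto
        then show "y \<in> A" using nk by simp
      qed
      then show "op_image (proj n k) A \<in> K" using A K1 by blast
    qed
    then show "proj n k \<in> clone_of_ideal K" using op unfolding clone_of_ideal_def by simp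
  qed
  have A3: "\<forall>f\<in>clone_of_ideal K. \<forall>m g. 1 \<le> m \<and> (\<forall>i < fst f. g i \<in> clone_of_ideal K \<and> fst (g i) = m)
              \<longrightarrow> comp_op f m g \<in> clone_of_ideal K"
  proof (intro ballI allI impI)
    fix f m g
    assume f: "f \<in> clone_of_ideal K" and h: "1 \<le> m \<and> (\<forall>i<fst f. g i \<in> clone_of_ideal K \<and> fst (g i) = m)"
    have opf: "is_op f" and imf: "\<forall>A\<in>K. op_image f A \<in> K" using f by (auto simp: clone_of_ideal_def)
    have gm: "\<And>i. i < fst f \<Longrightarrow> fst (g i) = m" using h by blast
    have opg: "\<And>i. i < fst f \<Longrightarrow> is_op (g i)" using h by (simp add: clone_of_ideal_def)
    have img: "\<And>i A. i < fst f \<Longrightarrow> A \<in> K \<Longrightarrow> op_image (g i) A \<in> K"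
      using h by (simp add: clone_of_ideal_def)
    have op: "is_op (comp_op f m g)"
    proof -
      have fa: "\<And>a b. \<forall>j<fst f. a j = b j \<Longrightarrow> snd f a = snd f b"
        using opf unfolding is_op_def by blast
      have ga: "\<And>i a b. i < fst f \<Longrightarrow> \<forall>j<m. a j = b j \<Longrightarrow> snd (g i) a = snd (g i) b"
      proof -
        fix i and a b :: "nat \<Rightarrow> pt" assume i: "i < fst f" and ab: "\<forall>j<m. a j = b j"
        have "\<forall>a b. (\<forall>j<fst (g i). a j = b j) \<longrightarrow> snd (g i) a = snd (g i) b"
          using opg[OF i] unfolding is_op_def by blast
        moreover have "\<forall>j<fst (g i). a j = b j" using ab gm[OF i] by simp
        ultimately show "snd (g i) a = snd (g i) b" by blast
      qed
      have "\<And>a b. \<forall>j<m. a j = b j \<Longrightarrow> snd f (\<lambda>i. snd (g i) a) = snd f (\<lambda>i. snd (g i) b)"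
      proof -
        fix a b :: "nat \<Rightarrow> pt" assume ab: "\<forall>j<m. a j = b j"
        show "snd f (\<lambda>i. snd (g i) a) = snd f (\<lambda>i. snd (g i) b)"
        proof (rule fa, intro allI impI)
          fix j assume "j < fst f"
          then show "snd (g j) a = snd (g j) b" using ga ab by blast
        qed
      qed
      moreover have "1 \<le> m" using h by blast
      ultimately show ?thesis unfolding is_op_def comp_op_def fst_conv snd_conv by blast
    qed
    have "\<forall>A\<in>K. op_image (comp_op f m g) A \<in> K"
    proof
      fix A assume A: "A \<in> K"
      define U where "U = (\<Union>i<fst f. op_image (g i) A)"
      have U: "U \<in> K" unfolding U_def by (rule ideal_like_UN[OF K]) (use img A in blast)
      have "op_image (comp_op f m g) A \<subseteq> op_image f U"
      proof
        fix y assume "y \<in> op_image (comp_op f m g) A"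
        then obtain a where a0: "\<forall>i<fst (comp_op f m g). a i \<in> A" and y0: "y = snd (comp_op f m g) a"
          by (rule op_imageE)
        have a: "\<forall>i<m. a i \<in> A" using a0 unfolding comp_op_def by simp
        have y: "y = snd f (\<lambda>i. snd (g i) a)" using y0 unfolding comp_op_def by simp
        have "\<forall>i<fst f. snd (g i) a \<in> U"
        proof (intro allI impI)
          fix i assume i: "i < fst f"
          have "snd (g i) a \<in> op_image (g i) A" by (rule op_imageI) (use a gm[OF i] in simp)
          then show "snd (g i) a \<in> U" unfolding U_def using i by blast
        qed
        then show "y \<in> op_image f U" unfolding y by (intro op_imageI) simp
      qed
      moreover have "op_image f U \<in> K" using imf U by blast
      ultimately show "op_image (comp_op f m g) A \<in> K" using K1 by blast
    qed
    then show "comp_op f m g \<in> clone_of_ideal K" using op unfolding clone_of_ideal_def by simp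
  qed
  show ?thesis unfolding is_clone_def using A1 A2 A3 by (intro conjI)
qed



definition goodc :: "(nat \<Rightarrow> pt) set \<Rightarrow> nat \<Rightarrow> bool" where
  "goodc Z i \<longleftrightarrow> (\<exists>p. \<forall>a\<in>Z. a i = p) \<or> inj_on (\<lambda>a. snd (a i)) Z"

lemma goodc_mono: "goodc Z i \<Longrightarrow> Y \<subseteq> Z \<Longrightarrow> goodc Y i"
  unfolding goodc_def by (meson inj_on_subset subsetD)

lemma good_subset:
  fixes Z :: "(nat \<Rightarrow> pt) set" and A :: "pt set"
  assumes A: "\<forall>l. finite (A \<inter> line l)" and Zs: "\<forall>a\<in>Z. \<forall>i<n. a i \<in> A" and inf: "infinite Z"
  shows "c \<le> n \<Longrightarrow> \<exists>Z'\<subseteq>Z. infinite Z' \<and> (\<forall>i<c. goodc Z' i)"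
proof (induction c)
  case 0 then show ?case using inf by blast
next
  case (Suc c)
  then obtain Z' where Z': "Z' \<subseteq> Z" "infinite Z'" "\<forall>i<c. goodc Z' i" by auto
  have cn: "c < n" using Suc by simp
  define Ls where "Ls = (\<lambda>a. snd (a c)) ` Z'"
  show ?case
  proof (cases "finite Ls")
    case True
    define V where "V = (\<lambda>a. a c) ` Z'"
    have "V \<subseteq> (\<Union>l\<in>Ls. A \<inter> line l)"
    proof
      fix x assume "x \<in> V"
      then obtain a where a: "a \<in> Z'" "x = a c" unfolding V_def by blast
      have "x \<in> A" using a Z'(1) Zs cn by blast
      moreover have "snd x \<in> Ls" unfolding Ls_def using a by simp
      ultimately show "x \<in> (\<Union>l\<in>Ls. A \<inter> line l)" unfolding line_def by blast
    qed
    moreover have "finite (\<Union>l\<in>Ls. A \<inter> line l)" by (intro finite_UN_I) (use True A in auto)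
    ultimately have fV: "finite V" by (rule finite_subset)
    have eq: "Z' = (\<Union>p\<in>V. {a\<in>Z'. a c = p})" unfolding V_def by auto
    have "\<not> (\<forall>p\<in>V. finite {a\<in>Z'. a c = p})"
    proof
      assume "\<forall>p\<in>V. finite {a\<in>Z'. a c = p}"
      then have "finite (\<Union>p\<in>V. {a\<in>Z'. a c = p})" using fV by (intro finite_UN_I) auto
      then show False using Z'(2) eq by simp
    qed
    then obtain p where p: "p \<in> V" "infinite {a\<in>Z'. a c = p}" by blast
    define Z2 where "Z2 = {a\<in>Z'. a c = p}"
    have sub: "Z2 \<subseteq> Z'" unfolding Z2_def by blast
    have "\<forall>i<Suc c. goodc Z2 i"
    proof (intro allI impI)
      fix i assume "i < Suc c"
      then consider "i < c" | "i = c" by linarith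
      then show "goodc Z2 i"
      proof cases
        case 1
        then have "goodc Z' i" using Z'(3) by blast
        then show ?thesis using sub by (rule goodc_mono)
      next
        case 2
        have "\<forall>a\<in>Z2. a i = p" unfolding Z2_def 2 by blast
        then show ?thesis unfolding goodc_def by blast
      qed
    qed
    moreover have "Z2 \<subseteq> Z" using sub Z'(1) by (rule subset_trans)
    moreover have "infinite Z2" unfolding Z2_def using p(2) .
    ultimately show ?thesis by blast
  next
    case False
    define ch where "ch = (\<lambda>l. SOME a. a \<in> Z' \<and> snd (a c) = l)"
    have ch: "\<And>l. l \<in> Ls \<Longrightarrow> ch l \<in> Z' \<and> snd (ch l c) = l"
    proof -
      fix l assume "l \<in> Ls"
      then have "\<exists>a. a \<in> Z' \<and> snd (a c) = l" unfolding Ls_def by blast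
      then show "ch l \<in> Z' \<and> snd (ch l c) = l" unfolding ch_def by (rule someI_ex)
    qed
    define Z2 where "Z2 = ch ` Ls"
    have injch: "inj_on ch Ls"
    proof (rule inj_onI)
      fix x y assume "x \<in> Ls" "y \<in> Ls" "ch x = ch y"
      then show "x = y" using ch by metis
    qed
    have inf2: "infinite Z2"
    proof
      assume "finite Z2"
      then have "finite Ls" unfolding Z2_def using injch by (rule finite_imageD)
      then show False using False by simp
    qed
    have sub: "Z2 \<subseteq> Z'" unfolding Z2_def using ch by blast
    have "\<forall>i<Suc c. goodc Z2 i"
    proof (intro allI impI)
      fix i assume "i < Suc c"
      then consider "i < c" | "i = c" by linarith
      then show "goodc Z2 i"
      proof cases
        case 1
        then have "goodc Z' i" using Z'(3) by blast
        then show ?thesis using sub by (rule goodc_mono)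
      next
        case 2
        have "inj_on (\<lambda>a. snd (a c)) Z2"
        proof (rule inj_onI)
          fix x y assume "x \<in> Z2" "y \<in> Z2" "snd (x c) = snd (y c)"
          then obtain lx ly where "lx \<in> Ls" "ly \<in> Ls" "x = ch lx" "y = ch ly" "snd (x c) = snd (y c)"
            unfolding Z2_def by blast
          then show "x = y" using ch by metis
        qed
        then show ?thesis unfolding goodc_def 2 by blast
      qed
    qed
    moreover have "Z2 \<subseteq> Z" using sub Z'(1) by (rule subset_trans)
    ultimately show ?thesis using inf2 by blast
  qed
qed

lemma subsingleton_card:
  assumes "\<forall>x\<in>S. \<forall>y\<in>S. x = y"
  shows "finite S \<and> card S \<le> 1"
proof (cases "S = {}")
  case True then show ?thesis by simp
next
  case False
  then obtain x where "x \<in> S" by blast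
  then have "S = {x}" using assms by blast
  then show ?thesis by simp
qed

lemma good_width:
  fixes Z :: "(nat \<Rightarrow> pt) set"
  assumes g: "\<forall>i<n. goodc Z i"
  shows "finite_width (\<Union>a\<in>Z. a ` {..<n})"
proof -
  have "\<forall>l. finite ((\<Union>a\<in>Z. a ` {..<n}) \<inter> line l) \<and> card ((\<Union>a\<in>Z. a ` {..<n}) \<inter> line l) \<le> n"
  proof
    fix l
    define S where "S = (\<lambda>i. {a i | a. a \<in> Z \<and> snd (a i) = l})"
    have e: "(\<Union>a\<in>Z. a ` {..<n}) \<inter> line l = (\<Union>i<n. S i)"
    proof
      show "(\<Union>a\<in>Z. a ` {..<n}) \<inter> line l \<subseteq> (\<Union>i<n. S i)"
      proof
        fix x assume "x \<in> (\<Union>a\<in>Z. a ` {..<n}) \<inter> line l"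
        then obtain a i where "a \<in> Z" "i < n" "x = a i" "snd x = l" unfolding line_def by blast
        then show "x \<in> (\<Union>i<n. S i)" unfolding S_def by blast
      qed
      show "(\<Union>i<n. S i) \<subseteq> (\<Union>a\<in>Z. a ` {..<n}) \<inter> line l"
        unfolding S_def line_def by blast
    qed
    have s1: "\<And>i. i < n \<Longrightarrow> finite (S i) \<and> card (S i) \<le> 1"
    proof -
      fix i assume i: "i < n"
      have "\<forall>x\<in>S i. \<forall>y\<in>S i. x = y"
      proof (intro ballI)
        fix x y assume "x \<in> S i" "y \<in> S i"
        then obtain a b where ab: "a \<in> Z" "b \<in> Z" "x = a i" "y = b i" "snd (a i) = l" "snd (b i) = l"
          unfolding S_def by blast
        from g i have "goodc Z i" by blast
        then show "x = y" unfolding goodc_def inj_on_def using ab by metis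
      qed
      then show "finite (S i) \<and> card (S i) \<le> 1" by (rule subsingleton_card)
    qed
    have "finite (\<Union>i<n. S i)" by (intro finite_UN_I) (use s1 in auto)
    moreover have "card (\<Union>i<n. S i) \<le> n"
    proof -
      have "card (\<Union>i<n. S i) \<le> (\<Sum>i<n. card (S i))" by (rule card_UN_le) simp
      also have "\<dots> \<le> (\<Sum>i<n. 1)" by (rule sum_mono) (use s1 in auto)
      finally show ?thesis by simp
    qed
    ultimately show "finite ((\<Union>a\<in>Z. a ` {..<n}) \<inter> line l) \<and> card ((\<Union>a\<in>Z. a ` {..<n}) \<inter> line l) \<le> n"
      unfolding e by simp
  qed
  then show ?thesis unfolding finite_width_def by blast
qed

lemma CI_sub_CJ: "clone_of_ideal idealI \<subseteq> clone_of_ideal idealJ"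
proof
  fix f assume f: "f \<in> clone_of_ideal idealI"
  have opf: "is_op f" using f unfolding clone_of_ideal_def by simp
  have imf: "\<forall>A. finite_width A \<longrightarrow> finite_width (op_image f A)"
    using f unfolding clone_of_ideal_def idealI_def by simp
  define n where "n = fst f"
  have "\<forall>A\<in>idealJ. op_image f A \<in> idealJ"
  proof
    fix A assume "A \<in> idealJ"
    then have A: "\<forall>l. finite (A \<inter> line l)" unfolding idealJ_def by simp
    have "\<forall>m. finite (op_image f A \<inter> line m)"
    proof (rule ccontr)
      assume "\<not> (\<forall>m. finite (op_image f A \<inter> line m))"
      then obtain m where O: "infinite (op_image f A \<inter> line m)" by blast
      define ch where "ch = (\<lambda>ob. SOME a. (\<forall>i<n. a i \<in> A) \<and> snd f a = ob)"
      have ch: "\<And>ob. ob \<in> op_image f A \<Longrightarrow> (\<forall>i<n. ch ob i \<in> A) \<and> snd f (ch ob) = ob"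
      proof -
        fix ob assume "ob \<in> op_image f A"
        then obtain a where a: "\<forall>i<fst f. a i \<in> A" "ob = snd f a" by (rule op_imageE)
        have "(\<forall>i<n. a i \<in> A) \<and> snd f a = ob" using a unfolding n_def by simp
        then have "\<exists>a. (\<forall>i<n. a i \<in> A) \<and> snd f a = ob" by (rule exI[where x=a])
        then show "(\<forall>i<n. ch ob i \<in> A) \<and> snd f (ch ob) = ob" unfolding ch_def by (rule someI_ex)
      qed
      define Z where "Z = ch ` (op_image f A \<inter> line m)"
      have inj: "inj_on ch (op_image f A \<inter> line m)"
      proof (rule inj_onI)
        fix x y assume xy: "x \<in> op_image f A \<inter> line m" "y \<in> op_image f A \<inter> line m" "ch x = ch y"
        have e1: "snd f (ch x) = x" using ch[OF IntD1[OF xy(1)]] by (rule conjunct2)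
        have e2: "snd f (ch y) = y" using ch[OF IntD1[OF xy(2)]] by (rule conjunct2)
        have "snd f (ch x) = snd f (ch y)" using xy(3) by (rule arg_cong)
        then show "x = y" unfolding e1 e2 .
      qed
      have infZ: "infinite Z"
      proof
        assume "finite Z"
        then have "finite (op_image f A \<inter> line m)" unfolding Z_def using inj by (rule finite_imageD)
        then show False using O by simp
      qed
      have Zs: "\<forall>a\<in>Z. \<forall>i<n. a i \<in> A"
      proof
        fix a assume "a \<in> Z"
        then obtain ob where ob: "ob \<in> op_image f A \<inter> line m" "a = ch ob" unfolding Z_def by blast
        have "\<forall>i<n. ch ob i \<in> A" using ch[OF IntD1[OF ob(1)]] by (rule conjunct1)
        then show "\<forall>i<n. a i \<in> A" using ob(2) by simp
      qed
      obtain Z' where Z': "Z' \<subseteq> Z" "infinite Z'" "\<forall>i<n. goodc Z' i"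
        using good_subset[OF A Zs infZ order_refl] by blast
      define T where "T = (\<Union>a\<in>Z'. a ` {..<n})"
      have fwT: "finite_width T" unfolding T_def using Z'(3) by (rule good_width)
      have sbs: "snd f ` Z' \<subseteq> op_image f T \<inter> line m"
      proof
        fix y assume "y \<in> snd f ` Z'"
        then obtain a where a: "a \<in> Z'" "y = snd f a" by blast
        then obtain ob where ob: "ob \<in> op_image f A \<inter> line m" "a = ch ob" using Z'(1) unfolding Z_def by blast
        have "snd f (ch ob) = ob" using ch[OF IntD1[OF ob(1)]] by (rule conjunct2)
        then have "y = ob" using ob(2) a(2) by simp
        moreover have "y \<in> op_image f T" unfolding a(2)
        proof (rule op_imageI)
          fix i assume "i < fst f"
          then show "a i \<in> T" unfolding T_def n_def using a(1) by auto
        qed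
        ultimately show "y \<in> op_image f T \<inter> line m" using ob by blast
      qed
      moreover have "inj_on (snd f) Z'"
      proof (rule inj_onI)
        fix x y assume xy: "x \<in> Z'" "y \<in> Z'" "snd f x = snd f y"
        obtain ox where ox: "ox \<in> op_image f A \<inter> line m" "x = ch ox" using xy(1) Z'(1) unfolding Z_def by blast
        obtain oy where oy: "oy \<in> op_image f A \<inter> line m" "y = ch oy" using xy(2) Z'(1) unfolding Z_def by blast
        have "snd f (ch ox) = ox" using ch[OF IntD1[OF ox(1)]] by (rule conjunct2)
        moreover have "snd f (ch oy) = oy" using ch[OF IntD1[OF oy(1)]] by (rule conjunct2)
        ultimately have "ox = oy" using xy(3) ox(2) oy(2) by simp
        then show "x = y" using ox(2) oy(2) by simp
      qed
      then have "infinite (snd f ` Z')"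
      proof -
        assume i: "inj_on (snd f) Z'"
        show ?thesis
        proof
          assume "finite (snd f ` Z')"
          then have "finite Z'" using i by (rule finite_imageD)
          then show False using Z'(2) by simp
        qed
      qed
      then have inf3: "infinite (op_image f T \<inter> line m)"
      proof -
        assume i: "infinite (snd f ` Z')"
        show ?thesis
        proof
          assume "finite (op_image f T \<inter> line m)"
          then have "finite (snd f ` Z')" using sbs by (rule finite_subset[rotated])
          then show False using i by simp
        qed
      qed
      have "finite_width (op_image f T)" using imf fwT by blast
      then obtain kk where "\<forall>n. finite (op_image f T \<inter> line n) \<and> card (op_image f T \<inter> line n) \<le> kk"
        unfolding finite_width_def by blast
      then show False using inf3 by blast
    qed
    then show "op_image f A \<in> idealJ" unfolding idealJ_def by simp
  qed
  then show "f \<in> clone_of_ideal idealJ" using opf unfolding clone_of_ideal_def by simp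
qed



definition hh :: "nat \<Rightarrow> nat" where
  "hh b = fst (prod_decode b) + snd (prod_decode b)"

definition uop :: op where
  "uop = (1, \<lambda>a. (fst (a 0), hh (snd (a 0))))"

lemma uop_op: "is_op uop"
  unfolding is_op_def uop_def by simp

lemma uop_J: "uop \<in> clone_of_ideal idealJ"
proof -
  have "\<forall>A\<in>idealJ. op_image uop A \<in> idealJ"
  proof
    fix A assume "A \<in> idealJ"
    then have A: "\<forall>l. finite (A \<inter> line l)" unfolding idealJ_def by simp
    have "\<forall>m. finite (op_image uop A \<inter> line m)"
    proof
      fix m
      define Bs where "Bs = prod_encode ` ({..m} \<times> {..m})"
      have sub: "op_image uop A \<inter> line m \<subseteq> (\<lambda>p. (fst p, m)) ` (\<Union>b\<in>Bs. A \<inter> line b)"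
      proof
        fix y assume "y \<in> op_image uop A \<inter> line m"
        then obtain a where a0: "\<forall>i<fst uop. a i \<in> A" "y = snd uop a" "snd y = m"
          unfolding op_image_def line_def by blast
        have a1: "a 0 \<in> A" using a0(1) unfolding uop_def by simp
        have a2: "y = (fst (a 0), hh (snd (a 0)))" using a0(2) unfolding uop_def by simp
        have a3: "hh (snd (a 0)) = m" using a0(3) a2 by simp
        note a = a1 a2 a3
        define b where "b = snd (a 0)"
        have "b = prod_encode (prod_decode b)" by simp
        moreover have "prod_decode b \<in> {..m} \<times> {..m}"
        proof -
          have "fst (prod_decode b) + snd (prod_decode b) = m" using a(3) unfolding hh_def b_def .
          then have "fst (prod_decode b) \<le> m" "snd (prod_decode b) \<le> m" by linarith+
          then show ?thesis by (simp add: mem_Times_iff)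
        qed
        ultimately have "b \<in> Bs" unfolding Bs_def by (metis image_eqI)
        moreover have "a 0 \<in> A \<inter> line b" using a(1) unfolding b_def line_def by simp
        ultimately have "a 0 \<in> (\<Union>b\<in>Bs. A \<inter> line b)" by blast
        moreover have "y = (\<lambda>p. (fst p, m)) (a 0)" using a(2,3) by simp
        ultimately show "y \<in> (\<lambda>p. (fst p, m)) ` (\<Union>b\<in>Bs. A \<inter> line b)" by (rule rev_image_eqI)
      qed
      have fB: "finite Bs" unfolding Bs_def by simp
      have "finite (\<Union>b\<in>Bs. A \<inter> line b)" using fB A by (intro finite_UN_I) auto
      then show "finite (op_image uop A \<inter> line m)" using sub finite_subset finite_imageI by blast
    qed
    then show "op_image uop A \<in> idealJ" unfolding idealJ_def by simp
  qed
  then show ?thesis using uop_op unfolding clone_of_ideal_def by simp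
qed

lemma uop_notI: "uop \<notin> clone_of_ideal idealI"
proof
  assume "uop \<in> clone_of_ideal idealI"
  then have im: "\<forall>A. finite_width A \<longrightarrow> finite_width (op_image uop A)"
    unfolding clone_of_ideal_def idealI_def by simp
  define A :: "pt set" where "A = {(b, b) | b. True}"
  have "\<forall>l. finite (A \<inter> line l) \<and> card (A \<inter> line l) \<le> 1"
  proof
    fix l
    have "A \<inter> line l = {(l, l)}" unfolding A_def line_def by auto
    then show "finite (A \<inter> line l) \<and> card (A \<inter> line l) \<le> 1" by simp
  qed
  then have "finite_width A" unfolding finite_width_def by blast
  then have "finite_width (op_image uop A)" using im by blast
  then obtain k where k: "\<forall>n. finite (op_image uop A \<inter> line n) \<and> card (op_image uop A \<inter> line n) \<le> k"
    unfolding finite_width_def by blast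
  define F where "F = (\<lambda>x. (prod_encode (x, k - x), k)) ` {..k}"
  have "F \<subseteq> op_image uop A \<inter> line k"
  proof
    fix y assume "y \<in> F"
    then obtain x where x: "x \<le> k" "y = (prod_encode (x, k - x), k)" unfolding F_def by blast
    define b where "b = prod_encode (x, k - x)"
    have "hh b = k" unfolding hh_def b_def using x by simp
    then have "y = snd uop (\<lambda>_. (b, b))" unfolding uop_def x b_def by simp
    moreover have "\<forall>i<fst uop. (\<lambda>_. (b, b)) i \<in> A" unfolding A_def by auto
    ultimately have "y \<in> op_image uop A" unfolding op_image_def by blast
    moreover have "snd y = k" using x by simp
    ultimately show "y \<in> op_image uop A \<inter> line k" unfolding line_def by blast
  qed
  moreover have "card F = Suc k"
  proof -
    have "inj_on (\<lambda>x. (prod_encode (x, k - x), k)) {..k}" unfolding inj_on_def by auto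
    then show ?thesis unfolding F_def by (simp add: card_image)
  qed
  ultimately have "Suc k \<le> card (op_image uop A \<inter> line k)" using k card_mono by metis
  moreover have "card (op_image uop A \<inter> line k) \<le> k" using k by blast
  ultimately show False by linarith
qed



lemma range_I_in_CI:
  assumes "is_op p" "\<forall>x. snd p x \<in> Y" "finite_width Y"
  shows "p \<in> clone_of_ideal idealI"
proof -
  have "\<forall>B\<in>idealI. op_image p B \<in> idealI"
  proof
    fix B
    have "op_image p B \<subseteq> Y" using assms(2) unfolding op_image_def by auto
    then show "op_image p B \<in> idealI" using assms(3) finite_width_mono unfolding idealI_def by blast
  qed
  then show ?thesis using assms(1) unfolding clone_of_ideal_def by simp
qed

lemma clone_comp:
  assumes "is_clone D" "f \<in> D" "1 \<le> m" "\<forall>i<fst f. g i \<in> D \<and> fst (g i) = m"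
  shows "comp_op f m g \<in> D"
  using assms unfolding is_clone_def by blast

lemma RJ:
  assumes D: "is_clone D" and CI: "clone_of_ideal idealI \<subseteq> D" and fD: "f \<in> D" and opf: "is_op f"
    and A: "A \<in> idealI" and RJ: "op_image f A \<in> idealJ" and RnI: "op_image f A \<notin> idealI"
    and r: "is_op r" and S: "S \<in> idealJ" and rS: "\<forall>x. snd r x \<in> S"
  shows "r \<in> D"
proof -
  define R where "R = op_image f A"
  define n where "n = fst f"
  define k where "k = fst r"
  have k1: "1 \<le> k" using r unfolding is_op_def k_def by simp
  have Rf: "\<forall>l. finite (R \<inter> line l)" using RJ unfolding R_def idealJ_def by simp
  have Sf: "\<forall>l. finite (S \<inter> line l)" using S unfolding idealJ_def by simp
  have unb: "\<forall>N. \<exists>l. N < card (R \<inter> line l)"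
  proof (rule ccontr)
    assume "\<not> (\<forall>N. \<exists>l. N < card (R \<inter> line l))"
    then obtain N where "\<forall>l. card (R \<inter> line l) \<le> N" by (meson not_le)
    then have "finite_width R" unfolding finite_width_def using Rf by blast
    then show False using RnI unfolding R_def idealI_def by simp
  qed
  define lsel where "lsel = (\<lambda>j. SOME l. card (S \<inter> line j) \<le> card (R \<inter> line l))"
  have lsel: "\<And>j. card (S \<inter> line j) \<le> card (R \<inter> line (lsel j))"
  proof -
    fix j
    obtain l where "card (S \<inter> line j) < card (R \<inter> line l)" using unb by blast
    then have "\<exists>l. card (S \<inter> line j) \<le> card (R \<inter> line l)" by (meson less_imp_le)
    then show "card (S \<inter> line j) \<le> card (R \<inter> line (lsel j))" unfolding lsel_def by (rule someI_ex)
  qed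
  define hsel where "hsel = (\<lambda>j. SOME h. h ` (S \<inter> line j) \<subseteq> R \<inter> line (lsel j) \<and> inj_on h (S \<inter> line j))"
  have hsel: "\<And>j. hsel j ` (S \<inter> line j) \<subseteq> R \<inter> line (lsel j) \<and> inj_on (hsel j) (S \<inter> line j)"
  proof -
    fix j
    have "\<exists>h. h ` (S \<inter> line j) \<subseteq> R \<inter> line (lsel j) \<and> inj_on h (S \<inter> line j)"
      using card_le_inj[OF _ _ lsel] Sf Rf by blast
    then show "hsel j ` (S \<inter> line j) \<subseteq> R \<inter> line (lsel j) \<and> inj_on (hsel j) (S \<inter> line j)"
      unfolding hsel_def by (rule someI_ex)
  qed
  define V :: "pt \<Rightarrow> pt \<Rightarrow> pt" where "V = (\<lambda>y z. if fst z = 0 \<and> y \<in> hsel (snd z) ` (S \<inter> line (snd z))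
      then inv_into (S \<inter> line (snd z)) (hsel (snd z)) y else ((0::nat), (0::nat)))"
  define vop :: op where "vop = (2, \<lambda>a. V (a 0) (a 1))"
  have vI: "vop \<in> clone_of_ideal idealI"
  proof -
    have opv: "is_op vop" unfolding is_op_def vop_def by simp
    have "\<forall>B\<in>idealI. op_image vop B \<in> idealI"
    proof
      fix B assume "B \<in> idealI"
      then obtain w where w: "\<forall>l. finite (B \<inter> line l) \<and> card (B \<inter> line l) \<le> w"
        unfolding idealI_def finite_width_def by blast
      have "\<forall>j. finite (op_image vop B \<inter> line j) \<and> card (op_image vop B \<inter> line j) \<le> Suc w"
      proof
        fix j
        define T where "T = inv_into (S \<inter> line j) (hsel j) ` (B \<inter> line (lsel j))"
        have sub: "op_image vop B \<inter> line j \<subseteq> insert (0,0) T"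
        proof
          fix y assume "y \<in> op_image vop B \<inter> line j"
          then obtain a :: "nat \<Rightarrow> pt" where a0: "\<forall>i<(2::nat). a i \<in> B" "y = V (a 0) (a 1)" "snd y = j"
            unfolding op_image_def vop_def line_def by auto
          have a1: "a 0 \<in> B" "a 1 \<in> B" using a0(1) by auto
          define y0 where "y0 = a 0"
          define z0 where "z0 = a 1"
          have yz: "y0 \<in> B" "z0 \<in> B" "y = V y0 z0" "snd y = j"
            using a1 a0 unfolding y0_def z0_def by auto
          show "y \<in> insert (0,0) T"
          proof (cases "fst z0 = 0 \<and> y0 \<in> hsel (snd z0) ` (S \<inter> line (snd z0))")
            case True
            define j' where "j' = snd z0"
            have yv: "y = inv_into (S \<inter> line j') (hsel j') y0" using yz(3) True unfolding V_def j'_def by simp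
            have "y \<in> S \<inter> line j'" unfolding yv using True inv_into_into unfolding j'_def by metis
            then have "j' = j" using yz(4) unfolding line_def by simp
            moreover have "y0 \<in> R \<inter> line (lsel j')" using True hsel unfolding j'_def by blast
            ultimately show ?thesis unfolding T_def using yv yz(1) by blast
          next
            case False
            then have "V y0 z0 = (0,0)" unfolding V_def by meson
            then show ?thesis using yz(3) by simp
          qed
        qed
        have "finite T" "card T \<le> w" unfolding T_def using w card_image_le le_trans by blast+
        then have "finite (insert (0,0) T)" "card (insert (0,0) T) \<le> Suc w"
          using card_insert_le_m1 by (auto simp: card_insert_if)
        then show "finite (op_image vop B \<inter> line j) \<and> card (op_image vop B \<inter> line j) \<le> Suc w"
          using sub by (meson card_mono finite_subset le_trans)
      qed
      then show "op_image vop B \<in> idealI" unfolding idealI_def finite_width_def by blast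
    qed
    then show ?thesis using opv unfolding clone_of_ideal_def by simp
  qed
  define Ch where "Ch = (\<lambda>ob. SOME a. (\<forall>i<n. a i \<in> A) \<and> snd f a = hsel (snd ob) ob)"
  have Ch: "\<And>ob. ob \<in> S \<Longrightarrow> (\<forall>i<n. Ch ob i \<in> A) \<and> snd f (Ch ob) = hsel (snd ob) ob"
  proof -
    fix ob assume "ob \<in> S"
    then have "ob \<in> S \<inter> line (snd ob)" unfolding line_def by simp
    then have "hsel (snd ob) ob \<in> R" using hsel by blast
    then obtain a where a: "\<forall>i<fst f. a i \<in> A" "hsel (snd ob) ob = snd f a"
      unfolding R_def op_image_def by blast
    then have "\<exists>a. (\<forall>i<n. a i \<in> A) \<and> snd f a = hsel (snd ob) ob"
      unfolding n_def by metis
    then show "(\<forall>i<n. Ch ob i \<in> A) \<and> snd f (Ch ob) = hsel (snd ob) ob" unfolding Ch_def by (rule someI_ex)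
  qed
  define rho :: "nat \<Rightarrow> op" where "rho = (\<lambda>i. (k, \<lambda>x. Ch (snd r x) i))"
  have rhoD: "\<forall>i<n. rho i \<in> D \<and> fst (rho i) = k"
  proof (intro allI impI conjI)
    fix i assume i: "i < n"
    have "is_op (rho i)" unfolding is_op_def rho_def using k1 r unfolding is_op_def k_def by (simp only: fst_conv snd_conv) metis
    moreover have "\<forall>x. snd (rho i) x \<in> A" unfolding rho_def using Ch rS i by simp
    moreover have "finite_width A" using A unfolding idealI_def by simp
    ultimately have "rho i \<in> clone_of_ideal idealI" by (rule range_I_in_CI)
    then show "rho i \<in> D" by (rule subsetD[OF CI])
    show "fst (rho i) = k" unfolding rho_def by simp
  qed
  define F' where "F' = comp_op f k rho"
  have F'D: "F' \<in> D" unfolding F'_def using clone_comp[OF D fD k1] rhoD n_def by simp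
  define eop :: op where "eop = (k, \<lambda>x. (0, snd (snd r x)))"
  have eD: "eop \<in> D"
  proof -
    have "is_op eop" unfolding is_op_def eop_def using k1 r unfolding is_op_def k_def by (simp only: fst_conv snd_conv) metis
    moreover have "\<forall>x. snd eop x \<in> {(0, j) | j. True}" unfolding eop_def by simp
    moreover have "finite_width {(0::nat, j) | j. True}"
    proof -
      have "\<forall>l. finite ({(0::nat, j) | j. True} \<inter> line l) \<and> card ({(0::nat, j) | j. True} \<inter> line l) \<le> 1"
      proof
        fix l
        have "{(0::nat, j) | j. True} \<inter> line l = {(0, l)}" unfolding line_def by auto
        then show "finite ({(0::nat, j) | j. True} \<inter> line l) \<and> card ({(0::nat, j) | j. True} \<inter> line l) \<le> 1" by simp
      qed
      then show ?thesis unfolding finite_width_def by blast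
    qed
    ultimately have "eop \<in> clone_of_ideal idealI" by (rule range_I_in_CI)
    then show ?thesis by (rule subsetD[OF CI])
  qed
  define G2 where "G2 = (\<lambda>i::nat. if i = 0 then F' else eop)"
  have vD: "vop \<in> D" using vI by (rule subsetD[OF CI])
  have "\<forall>i<fst vop. G2 i \<in> D \<and> fst (G2 i) = k"
  proof (intro allI impI)
    fix i assume "i < fst vop"
    then have "i = 0 \<or> i = 1" unfolding vop_def by auto
    moreover have "fst F' = k" unfolding F'_def comp_op_def by simp
    moreover have "fst eop = k" unfolding eop_def by simp
    ultimately show "G2 i \<in> D \<and> fst (G2 i) = k" unfolding G2_def using F'D eD by auto
  qed
  then have cD: "comp_op vop k G2 \<in> D" using clone_comp[OF D vD k1] by blast
  have "comp_op vop k G2 = r"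
  proof -
    have "snd (comp_op vop k G2) x = snd r x" for x
    proof -
      define ob where "ob = snd r x"
      have obS: "ob \<in> S" unfolding ob_def using rS by simp
      then have obl: "ob \<in> S \<inter> line (snd ob)" unfolding line_def by simp
      have e1: "snd (comp_op vop k G2) x = V (snd (G2 0) x) (snd (G2 1) x)"
        unfolding comp_op_def vop_def by simp
      have e2: "snd (G2 0) x = snd f (Ch ob)"
        unfolding G2_def F'_def comp_op_def rho_def ob_def by simp
      have e3: "snd (G2 1) x = (0, snd ob)"
        unfolding G2_def eop_def ob_def by simp
      have "snd (comp_op vop k G2) x = V (snd f (Ch ob)) (0, snd ob)"
        unfolding e1 e2 e3 ..
      also have "\<dots> = V (hsel (snd ob) ob) (0, snd ob)" using Ch[OF obS] by simp
      also have "\<dots> = ob" unfolding V_def using obl hsel by auto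
      finally show ?thesis unfolding ob_def .
    qed
    then have "snd (comp_op vop k G2) = snd r" by (rule ext)
    moreover have "fst (comp_op vop k G2) = fst r" unfolding comp_op_def k_def by simp
    ultimately show ?thesis by (rule prod_eqI[rotated])
  qed
  then show ?thesis using cD by simp
qed



definition agree :: "pt option list \<Rightarrow> (nat \<Rightarrow> pt) \<Rightarrow> bool" where
  "agree r z \<longleftrightarrow> (\<forall>i<length r. \<forall>p. r ! i = Some p \<longrightarrow> z i = p)"

definition freei :: "pt option list \<Rightarrow> nat \<Rightarrow> bool" where
  "freei r i \<longleftrightarrow> i < length r \<and> r ! i = None"

locale GJ =
  fixes gg :: "(nat \<Rightarrow> pt) \<Rightarrow> pt" and k :: nat
  assumes gJ: "\<forall>A\<in>idealJ. op_image (k, gg) A \<in> idealJ"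
begin

definition Out :: "pt option list \<Rightarrow> nat \<Rightarrow> nat \<Rightarrow> pt set" where
  "Out r m N = {gg z | z. agree r z \<and> (\<forall>i. freei r i \<longrightarrow> N \<le> snd (z i)) \<and> snd (gg z) = m}"

lemma lemmaG:
  assumes len: "length r = k"
  shows "\<exists>N. finite (Out r m N)"
proof (rule ccontr)
  assume "\<not> (\<exists>N. finite (Out r m N))"
  then have inf: "\<And>N. infinite (Out r m N)" by blast
  define Y where "Y = (\<lambda>j. SOME Y. finite Y \<and> card Y = j \<and> Y \<subseteq> Out r m j)"
  have Y: "\<And>j. finite (Y j) \<and> card (Y j) = j \<and> Y j \<subseteq> Out r m j"
  proof -
    fix j
    have "\<exists>Y. finite Y \<and> card Y = j \<and> Y \<subseteq> Out r m j" using infinite_arbitrarily_large[OF inf] by blast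
    then show "finite (Y j) \<and> card (Y j) = j \<and> Y j \<subseteq> Out r m j" unfolding Y_def by (rule someI_ex)
  qed
  define P where "P = (\<lambda>j ob z. agree r z \<and> (\<forall>i. freei r i \<longrightarrow> j \<le> snd (z i)) \<and> snd (gg z) = m \<and> gg z = ob)"
  define pre where "pre = (\<lambda>j ob. SOME z. P j ob z)"
  have pre: "\<And>j ob. ob \<in> Out r m j \<Longrightarrow> P j ob (pre j ob)"
  proof -
    fix j ob assume "ob \<in> Out r m j"
    then have "\<exists>z. P j ob z" unfolding Out_def P_def by blast
    then show "P j ob (pre j ob)" unfolding pre_def by (rule someI_ex)
  qed
  define W where "W = (\<lambda>j. pre j ` Y j)"
  define T0 where "T0 = {p. \<exists>i<k. r ! i = Some p}"
  define T where "T = T0 \<union> {z i | z i j. z \<in> W j \<and> i < k}"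
  have T0f: "finite T0"
  proof -
    have "T0 \<subseteq> (\<lambda>i. the (r ! i)) ` {..<k}" unfolding T0_def by force
    then show ?thesis by (rule finite_subset) simp
  qed
  have TJ: "T \<in> idealJ"
  proof -
    have "\<forall>l. finite (T \<inter> line l)"
    proof
      fix l
      have "T \<inter> line l \<subseteq> T0 \<union> (\<Union>j\<in>{..l}. \<Union>z\<in>W j. (\<lambda>i. z i) ` {..<k})"
      proof
        fix x assume x: "x \<in> T \<inter> line l"
        show "x \<in> T0 \<union> (\<Union>j\<in>{..l}. \<Union>z\<in>W j. (\<lambda>i. z i) ` {..<k})"
        proof (cases "x \<in> T0")
          case True then show ?thesis by blast
        next
          case False
          then obtain z i j where zij: "z \<in> W j" "i < k" "x = z i" using x unfolding T_def by blast
          then obtain ob where ob: "ob \<in> Y j" "z = pre j ob" unfolding W_def by blast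
          have Pz: "P j ob z" using pre Y ob by blast
          show ?thesis
          proof (cases "r ! i")
            case None
            then have "freei r i" unfolding freei_def using zij len by simp
            then have "j \<le> snd (z i)" using Pz unfolding P_def by blast
            moreover have "snd (z i) = l" using x zij unfolding line_def by simp
            ultimately show ?thesis using zij by blast
          next
            case (Some p)
            then have "z i = p" using Pz zij len unfolding P_def agree_def by blast
            then have "x \<in> T0" unfolding T0_def using Some zij by blast
            then show ?thesis by blast
          qed
        qed
      qed
      moreover have "finite (T0 \<union> (\<Union>j\<in>{..l}. \<Union>z\<in>W j. (\<lambda>i. z i) ` {..<k}))"
        using T0f Y unfolding W_def by blast
      ultimately show "finite (T \<inter> line l)" by (rule finite_subset)
    qed
    then show ?thesis unfolding idealJ_def by simp
  qed
  then have "op_image (k, gg) T \<in> idealJ" using gJ by blast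
  then have fin: "finite (op_image (k, gg) T \<inter> line m)" unfolding idealJ_def by simp
  have sub: "\<And>j. Y j \<subseteq> op_image (k, gg) T \<inter> line m"
  proof
    fix j ob assume ob: "ob \<in> Y j"
    then have Pz: "P j ob (pre j ob)" using pre Y by blast
    have "\<forall>i<k. pre j ob i \<in> T" unfolding T_def W_def using ob by blast
    then have "gg (pre j ob) \<in> op_image (k, gg) T" unfolding op_image_def by auto
    then show "ob \<in> op_image (k, gg) T \<inter> line m" using Pz unfolding P_def line_def by auto
  qed
  define M where "M = card (op_image (k, gg) T \<inter> line m)"
  have "card (Y (Suc M)) \<le> M" unfolding M_def using card_mono[OF fin sub] .
  then show False using Y[of "Suc M"] by simp
qed

definition Nb :: "pt option list \<Rightarrow> nat \<Rightarrow> nat" where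
  "Nb r m = (LEAST N. finite (Out r m N))"

lemma Nb_finite: "length r = k \<Longrightarrow> finite (Out r m (Nb r m))"
  unfolding Nb_def using lemmaG by (metis LeastI_ex)

definition stp :: "pt option list \<Rightarrow> nat \<Rightarrow> (nat \<Rightarrow> pt) \<Rightarrow> bool" where
  "stp r m z \<longleftrightarrow> (\<forall>i. freei r i \<longrightarrow> Nb r m \<le> snd (z i))"

definition nx :: "pt option list \<Rightarrow> nat \<Rightarrow> (nat \<Rightarrow> pt) \<Rightarrow> nat" where
  "nx r m z = (LEAST i. freei r i \<and> snd (z i) < Nb r m)"

lemma nx_prop: "\<not> stp r m z \<Longrightarrow> freei r (nx r m z) \<and> snd (z (nx r m z)) < Nb r m"
  unfolding stp_def nx_def by (metis (mono_tags, lifting) LeastI_ex not_le)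

definition stepf :: "nat \<Rightarrow> (nat \<Rightarrow> pt) \<Rightarrow> pt option list \<Rightarrow> pt option list" where
  "stepf m z r = (if stp r m z then r else r[nx r m z := Some (z (nx r m z))])"

definition RR :: "nat \<Rightarrow> (nat \<Rightarrow> pt) \<Rightarrow> nat \<Rightarrow> pt option list" where
  "RR m z s = (stepf m z ^^ s) (replicate k None)"

lemma RR_0: "RR m z 0 = replicate k None" unfolding RR_def by simp
lemma RR_Suc: "RR m z (Suc s) = stepf m z (RR m z s)" unfolding RR_def by simp

lemma RR_len: "length (RR m z s) = k"
  by (induction s) (simp_all add: RR_0 RR_Suc stepf_def)

lemma RR_agree: "agree (RR m z s) z"
proof (induction s)
  case 0 then show ?case unfolding RR_0 agree_def by simp
next
  case (Suc s)
  define r where "r = RR m z s"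
  show ?case
  proof (cases "stp r m z")
    case True then show ?thesis using Suc unfolding RR_Suc stepf_def r_def by simp
  next
    case False
    have "nx r m z < length r" using nx_prop[OF False] unfolding freei_def by simp
    then show ?thesis using Suc False unfolding RR_Suc stepf_def r_def[symmetric] agree_def
      by (auto simp: nth_list_update)
  qed
qed

lemma RR_card: "stp (RR m z s) m z \<or> s \<le> card {i. i < k \<and> RR m z s ! i \<noteq> None}"
proof (induction s)
  case 0 then show ?case by simp
next
  case (Suc s)
  define r where "r = RR m z s"
  show ?case
  proof (cases "stp r m z")
    case True then show ?thesis unfolding RR_Suc stepf_def r_def[symmetric] by simp
  next
    case False
    define i where "i = nx r m z"
    have fi: "freei r i" using nx_prop[OF False] unfolding i_def by simp
    have lr: "length r = k" unfolding r_def by (rule RR_len)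
    have e: "{j. j < k \<and> r[i := Some (z i)] ! j \<noteq> None} = insert i {j. j < k \<and> r ! j \<noteq> None}"
      using fi lr unfolding freei_def by (auto simp: nth_list_update)
    have "card (insert i {j. j < k \<and> r ! j \<noteq> None}) = Suc (card {j. j < k \<and> r ! j \<noteq> None})"
      using fi unfolding freei_def by simp
    moreover have "s \<le> card {j. j < k \<and> r ! j \<noteq> None}" using Suc False unfolding r_def by blast
    ultimately show ?thesis unfolding RR_Suc stepf_def r_def[symmetric] using False e i_def by simp
  qed
qed

lemma RR_stp: "stp (RR m z k) m z"
proof (rule ccontr)
  assume ns: "\<not> stp (RR m z k) m z"
  define r where "r = RR m z k"
  have "k \<le> card {i. i < k \<and> r ! i \<noteq> None}" using RR_card[of m z k] ns unfolding r_def by blast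
  moreover have "{i. i < k \<and> r ! i \<noteq> None} \<subseteq> {..<k}" by blast
  ultimately have "{i. i < k \<and> r ! i \<noteq> None} = {..<k}"
    by (metis (no_types, lifting) card_lessThan card_seteq finite_lessThan)
  then have "\<forall>i. \<not> freei r i" unfolding freei_def using RR_len[of m z k] unfolding r_def by auto
  then show False using ns unfolding stp_def r_def by blast
qed

definition code :: "nat \<Rightarrow> (nat \<Rightarrow> pt) \<Rightarrow> pt" where
  "code s z = (let m = snd (gg z); r = RR m z s in
     (if stp r m z then 2 * fst (gg z) else Suc (2 * to_nat (nx r m z, snd (z (nx r m z)))),
      to_nat (m, r)))"

lemma code_J: "range (code s) \<in> idealJ"
proof -
  have "\<forall>L. finite (range (code s) \<inter> line L)"
  proof
    fix L
    obtain m :: nat and r :: "pt option list" where mr: "from_nat L = (m, r)" by (metis prod.exhaust)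
    show "finite (range (code s) \<inter> line L)"
    proof (cases "range (code s) \<inter> line L = {}")
      case True then show ?thesis by simp
    next
      case False
      define C where "C = (\<lambda>ob. 2 * fst ob) ` Out r m (Nb r m) \<union>
          (\<lambda>ib. Suc (2 * to_nat ib)) ` ({..<length r} \<times> {..<Nb r m})"
      have key: "\<And>z. snd (code s z) = L \<Longrightarrow> snd (gg z) = m \<and> RR m z s = r"
      proof -
        fix z assume "snd (code s z) = L"
        then have "to_nat (snd (gg z), RR (snd (gg z)) z s) = L" unfolding code_def Let_def by simp
        then have "from_nat L = (snd (gg z), RR (snd (gg z)) z s)" by (metis from_nat_to_nat)
        then show "snd (gg z) = m \<and> RR m z s = r" using mr by simp
      qed
      have lr: "length r = k"
        using False key RR_len unfolding line_def by (metis (mono_tags, lifting) Int_emptyI imageE mem_Collect_eq)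
      have sub: "range (code s) \<inter> line L \<subseteq> (\<lambda>c. (c, L)) ` C"
      proof
        fix y assume "y \<in> range (code s) \<inter> line L"
        then obtain z where z: "y = code s z" "snd y = L" unfolding line_def by blast
        have mz: "snd (gg z) = m" "RR m z s = r" using key z by auto
        have ag: "agree r z" using RR_agree mz(2) by metis
        have cz: "code s z = (if stp r m z then 2 * fst (gg z) else Suc (2 * to_nat (nx r m z, snd (z (nx r m z)))), to_nat (m, r))"
          unfolding code_def Let_def mz(1) mz(2) ..
        have yL: "to_nat (m, r) = L" using z cz by simp
        show "y \<in> (\<lambda>c. (c, L)) ` C"
        proof (cases "stp r m z")
          case True
          have "gg z \<in> Out r m (Nb r m)"
            unfolding Out_def using ag True mz(1) unfolding stp_def by blast
          moreover have "y = (2 * fst (gg z), L)" using z(1) cz True yL by simp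
          ultimately show ?thesis unfolding C_def by blast
        next
          case False
          have np: "nx r m z < length r" "snd (z (nx r m z)) < Nb r m"
            using nx_prop[OF False] unfolding freei_def by auto
          have "y = (Suc (2 * to_nat (nx r m z, snd (z (nx r m z)))), L)"
            using z(1) cz False yL by simp
          then show ?thesis unfolding C_def using np by blast
        qed
      qed
      have "finite C" unfolding C_def using Nb_finite[OF lr] by blast
      then show ?thesis using sub by (meson finite_imageI finite_subset)
    qed
  qed
  then show ?thesis unfolding idealJ_def by simp
qed

end



context GJ
begin

definition Pas :: "pt set \<Rightarrow> nat \<Rightarrow> (nat \<Rightarrow> pt) set" where
  "Pas B m = {z. (\<forall>i<k. z i \<in> B) \<and> (\<forall>s\<le>k. code s z \<in> B) \<and> snd (gg z) = m}"

lemma code_eq: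
  assumes "snd (gg z) = m" "RR m z s = r"
  shows "code s z = (if stp r m z then 2 * fst (gg z) else Suc (2 * to_nat (nx r m z, snd (z (nx r m z)))), to_nat (m, r))"
  unfolding code_def Let_def assms(1) assms(2) ..

definition EE :: "pt set \<Rightarrow> nat \<Rightarrow> pt option list \<Rightarrow> (nat \<times> pt) set" where
  "EE B m r = {(i, q). (Suc (2 * to_nat (i, snd q)), to_nat (m, r)) \<in> B \<and> q \<in> B}"

lemma EE_bound:
  assumes w: "\<forall>l. finite (B \<inter> line l) \<and> card (B \<inter> line l) \<le> w"
  shows "finite (EE B m r) \<and> card (EE B m r) \<le> w * w"
proof -
  define dec :: "pt \<Rightarrow> nat \<times> nat" where "dec = (\<lambda>c. from_nat ((fst c - 1) div 2))"
  define L where "L = to_nat (m, r)"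
  define Sig where "Sig = (SIGMA c:(B \<inter> line L). B \<inter> line (snd (dec c)))"
  define Phi :: "pt \<times> pt \<Rightarrow> nat \<times> pt" where "Phi = (\<lambda>cq. (fst (dec (fst cq)), snd cq))"
  have sub: "EE B m r \<subseteq> Phi ` Sig"
  proof
    fix x assume "x \<in> EE B m r"
    then obtain i q where x: "x = (i, q)" "(Suc (2 * to_nat (i, snd q)), L) \<in> B" "q \<in> B"
      unfolding EE_def L_def by blast
    define c where "c = (Suc (2 * to_nat (i, snd q)), L)"
    have dc: "dec c = (i, snd q)" unfolding dec_def c_def by simp
    have "c \<in> B \<inter> line L" using x(2) unfolding c_def line_def by simp
    moreover have "q \<in> B \<inter> line (snd (dec c))" using x(3) unfolding dc line_def by simp
    ultimately have "(c, q) \<in> Sig" unfolding Sig_def by blast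
    moreover have "x = Phi (c, q)" unfolding Phi_def using x(1) dc by simp
    ultimately show "x \<in> Phi ` Sig" by blast
  qed
  have fS: "finite Sig" unfolding Sig_def using w by blast
  have "card Sig = (\<Sum>c\<in>B \<inter> line L. card (B \<inter> line (snd (dec c))))"
    unfolding Sig_def using w by (intro card_SigmaI) auto
  also have "\<dots> \<le> (\<Sum>c\<in>B \<inter> line L. w)" using w by (intro sum_mono) blast
  also have "\<dots> = card (B \<inter> line L) * w" by simp
  also have "\<dots> \<le> w * w" using w by simp
  finally have cS: "card Sig \<le> w * w" .
  have "finite (Phi ` Sig)" using fS by simp
  moreover have "card (Phi ` Sig) \<le> w * w" using cS card_image_le[OF fS, of Phi] by linarith
  ultimately show ?thesis using sub by (meson card_mono finite_subset le_trans)
qed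

lemma V_step:
  assumes s: "s < k"
  shows "(\<lambda>z. RR m z (Suc s)) ` Pas B m \<subseteq> (\<lambda>z. RR m z s) ` Pas B m \<union>
           (\<Union>r\<in>(\<lambda>z. RR m z s) ` Pas B m. (\<lambda>iq. r[fst iq := Some (snd iq)]) ` EE B m r)"
proof
  fix x assume "x \<in> (\<lambda>z. RR m z (Suc s)) ` Pas B m"
  then obtain z where z: "z \<in> Pas B m" "x = RR m z (Suc s)" by blast
  define r where "r = RR m z s"
  have rV: "r \<in> (\<lambda>z. RR m z s) ` Pas B m" unfolding r_def using z(1) by blast
  have zP: "\<forall>i<k. z i \<in> B" "\<forall>s\<le>k. code s z \<in> B" "snd (gg z) = m" using z(1) unfolding Pas_def by auto
  show "x \<in> (\<lambda>z. RR m z s) ` Pas B m \<union>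
           (\<Union>r\<in>(\<lambda>z. RR m z s) ` Pas B m. (\<lambda>iq. r[fst iq := Some (snd iq)]) ` EE B m r)"
  proof (cases "stp r m z")
    case True
    then have "x = r" unfolding z(2) RR_Suc stepf_def r_def[symmetric] by simp
    then show ?thesis using rV by blast
  next
    case False
    define i where "i = nx r m z"
    have x: "x = r[i := Some (z i)]" unfolding z(2) RR_Suc stepf_def r_def[symmetric] i_def using False by simp
    have fi: "freei r i" using nx_prop[OF False] unfolding i_def by simp
    have lr: "length r = k" unfolding r_def by (rule RR_len)
    have ik: "i < k" using fi lr unfolding freei_def by simp
    have cs: "code s z = (Suc (2 * to_nat (i, snd (z i))), to_nat (m, r))"
      using code_eq[OF zP(3) r_def[symmetric]] False unfolding i_def by simp
    have "code s z \<in> B" using zP(2) s by simp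
    then have "(i, z i) \<in> EE B m r" unfolding EE_def using cs zP(1) ik by simp
    then have "x \<in> (\<lambda>iq. r[fst iq := Some (snd iq)]) ` EE B m r" unfolding x by force
    then show ?thesis using rV by blast
  qed
qed

lemma V_bound:
  assumes w: "\<forall>l. finite (B \<inter> line l) \<and> card (B \<inter> line l) \<le> w"
  shows "s \<le> k \<Longrightarrow> finite ((\<lambda>z. RR m z s) ` Pas B m) \<and> card ((\<lambda>z. RR m z s) ` Pas B m) \<le> Suc (w * w) ^ s"
proof (induction s)
  case 0
  have sub: "(\<lambda>z. RR m z 0) ` Pas B m \<subseteq> {replicate k None}" unfolding RR_0 by blast
  have "finite ((\<lambda>z. RR m z 0) ` Pas B m)" using sub by (rule finite_subset) simp
  moreover have "card ((\<lambda>z. RR m z 0) ` Pas B m) \<le> card {replicate k None :: pt option list}"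
    by (rule card_mono) (simp, rule sub)
  ultimately show ?case by simp
next
  case (Suc s)
  define Vs where "Vs = (\<lambda>z. RR m z s) ` Pas B m"
  have IH: "finite Vs" "card Vs \<le> Suc (w * w) ^ s" using Suc unfolding Vs_def by auto
  define U where "U = (\<Union>r\<in>Vs. (\<lambda>iq. r[fst iq := Some (snd iq)]) ` EE B m r)"
  have sub: "(\<lambda>z. RR m z (Suc s)) ` Pas B m \<subseteq> Vs \<union> U"
    unfolding Vs_def U_def using V_step Suc by simp
  have fE: "\<And>r. finite (EE B m r) \<and> card (EE B m r) \<le> w * w" using EE_bound[OF w] by blast
  have fU: "finite U" unfolding U_def using IH(1) fE by blast
  have "card U \<le> (\<Sum>r\<in>Vs. card ((\<lambda>iq. r[fst iq := Some (snd iq)]) ` EE B m r))"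
    unfolding U_def using IH(1) by (rule card_UN_le)
  also have "\<dots> \<le> (\<Sum>r\<in>Vs. w * w)"
  proof (rule sum_mono)
    fix r assume "r \<in> Vs"
    have "card ((\<lambda>iq. r[fst iq := Some (snd iq)]) ` EE B m r) \<le> card (EE B m r)"
      using fE by (intro card_image_le) blast
    then show "card ((\<lambda>iq. r[fst iq := Some (snd iq)]) ` EE B m r) \<le> w * w" using fE[of r] by linarith
  qed
  also have "\<dots> = card Vs * (w * w)" by simp
  finally have cU: "card U \<le> card Vs * (w * w)" .
  have "card (Vs \<union> U) \<le> card Vs + card U" by (rule card_Un_le)
  also have "\<dots> \<le> card Vs * Suc (w * w)" using cU by simp
  also have "\<dots> \<le> Suc (w * w) ^ s * Suc (w * w)" using IH(2) by (rule mult_right_mono) simp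
  also have "\<dots> = Suc (w * w) ^ Suc s" by simp
  finally have "card (Vs \<union> U) \<le> Suc (w * w) ^ Suc s" .
  moreover have "finite (Vs \<union> U)" using IH(1) fU by simp
  ultimately show ?case using sub by (meson card_mono finite_subset le_trans)
qed

lemma out_bound:
  assumes w: "\<forall>l. finite (B \<inter> line l) \<and> card (B \<inter> line l) \<le> w"
  shows "finite (gg ` Pas B m) \<and> card (gg ` Pas B m) \<le> Suc (w * w) ^ k * w"
proof -
  define Vk where "Vk = (\<lambda>z. RR m z k) ` Pas B m"
  have VB: "finite Vk" "card Vk \<le> Suc (w * w) ^ k" using V_bound[OF w, of k m] unfolding Vk_def by auto
  define F :: "pt option list \<Rightarrow> pt set" where "F = (\<lambda>r. (\<lambda>c. (fst c div 2, m)) ` (B \<inter> line (to_nat (m, r))))"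
  have sub: "gg ` Pas B m \<subseteq> (\<Union>rr\<in>Vk. F rr)"
  proof
    fix y assume "y \<in> gg ` Pas B m"
    then obtain z where z: "z \<in> Pas B m" "y = gg z" by blast
    have zP: "\<forall>s\<le>k. code s z \<in> B" "snd (gg z) = m" using z(1) unfolding Pas_def by auto
    define r where "r = RR m z k"
    have rV: "r \<in> Vk" unfolding r_def Vk_def using z(1) by blast
    have st: "stp r m z" unfolding r_def by (rule RR_stp)
    have cs: "code k z = (2 * fst (gg z), to_nat (m, r))"
      using code_eq[OF zP(2) r_def[symmetric]] st by simp
    have "code k z \<in> B" using zP(1) by simp
    then have "code k z \<in> B \<inter> line (to_nat (m, r))" using cs unfolding line_def by simp
    moreover have "y = (fst (code k z) div 2, m)" using cs z(2) zP(2) by (simp add: prod_eq_iff)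
    ultimately have "y \<in> F r" unfolding F_def by blast
    then show "y \<in> (\<Union>rr\<in>Vk. F rr)" using rV by blast
  qed
  have fF: "\<And>r :: pt option list. finite (F r) \<and> card (F r) \<le> w"
  proof -
    fix r :: "pt option list"
    have "finite (B \<inter> line (to_nat (m, r)))" "card (B \<inter> line (to_nat (m, r))) \<le> w" using w by auto
    then show "finite (F r) \<and> card (F r) \<le> w" unfolding F_def using card_image_le le_trans by blast
  qed
  have "finite (\<Union>rr\<in>Vk. F rr)" using VB(1) fF by blast
  moreover have "card (\<Union>rr\<in>Vk. F rr) \<le> Suc (w * w) ^ k * w"
  proof -
    have "card (\<Union>rr\<in>Vk. F rr) \<le> (\<Sum>r\<in>Vk. card (F r))" using VB(1) by (rule card_UN_le)
    also have "\<dots> \<le> (\<Sum>r\<in>Vk. w)" using fF by (intro sum_mono) blast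
    also have "\<dots> = card Vk * w" by simp
    also have "\<dots> \<le> Suc (w * w) ^ k * w" using VB(2) by (rule mult_right_mono) simp
    finally show ?thesis .
  qed
  ultimately show ?thesis using sub by (meson card_mono finite_subset le_trans)
qed

definition trunc :: "(nat \<Rightarrow> pt) \<Rightarrow> nat \<Rightarrow> pt" where
  "trunc b = (\<lambda>i. if i < k then b i else (0, 0))"

definition HF :: "(nat \<Rightarrow> pt) \<Rightarrow> pt" where
  "HF b = (if (\<forall>s\<le>k. b (k + s) = code s (trunc b)) then gg (trunc b) else (0, 0))"

definition Hop :: op where
  "Hop = (k + Suc k, HF)"

lemma Hop_op: "is_op Hop"
  unfolding is_op_def
proof (intro conjI allI impI)
  show "1 \<le> fst Hop" unfolding Hop_def by simp
  fix a b :: "nat \<Rightarrow> pt" assume ab0: "\<forall>i<fst Hop. a i = b i"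
  have ab: "\<forall>i<k + Suc k. a i = b i" using ab0 unfolding Hop_def by simp
  have t: "trunc a = trunc b" unfolding trunc_def using ab by auto
  have e: "\<And>s. s \<le> k \<Longrightarrow> a (k + s) = b (k + s)" using ab by auto
  have c: "(\<forall>s\<le>k. a (k + s) = code s (trunc b)) = (\<forall>s\<le>k. b (k + s) = code s (trunc b))"
    using e by auto
  show "snd Hop a = snd Hop b" unfolding Hop_def snd_conv HF_def t c ..
qed

lemma Hop_I: "Hop \<in> clone_of_ideal idealI"
proof -
  have "\<forall>B\<in>idealI. op_image Hop B \<in> idealI"
  proof
    fix B assume "B \<in> idealI"
    then obtain w where w: "\<forall>l. finite (B \<inter> line l) \<and> card (B \<inter> line l) \<le> w"
      unfolding idealI_def finite_width_def by blast
    have "\<forall>m. finite (op_image Hop B \<inter> line m) \<and> card (op_image Hop B \<inter> line m) \<le> Suc (Suc (w * w) ^ k * w)"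
    proof
      fix m
      have sub: "op_image Hop B \<inter> line m \<subseteq> insert (0, 0) (gg ` Pas B m)"
      proof
        fix y assume y: "y \<in> op_image Hop B \<inter> line m"
        then obtain b where b: "\<forall>i<fst Hop. b i \<in> B" "y = snd Hop b" by (blast elim: op_imageE)
        have ym: "snd y = m" using y unfolding line_def by simp
        show "y \<in> insert (0, 0) (gg ` Pas B m)"
        proof (cases "\<forall>s\<le>k. b (k + s) = code s (trunc b)")
          case True
          have "HF b = gg (trunc b)" unfolding HF_def using True by (rule if_P)
          then have yg: "y = gg (trunc b)" using b(2) unfolding Hop_def by simp
          have "\<forall>i<k. trunc b i \<in> B" using b(1) unfolding Hop_def trunc_def by simp
          moreover have "\<forall>s\<le>k. code s (trunc b) \<in> B"
          proof (intro allI impI)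
            fix s assume "s \<le> k"
            then have "b (k + s) \<in> B" using b(1) unfolding Hop_def by simp
            then show "code s (trunc b) \<in> B" using True \<open>s \<le> k\<close> by simp
          qed
          moreover have "snd (gg (trunc b)) = m" using ym yg by simp
          ultimately have "trunc b \<in> Pas B m" unfolding Pas_def by blast
          then show ?thesis using yg by blast
        next
          case False
          have "HF b = (0, 0)" unfolding HF_def using False by (rule if_not_P)
          then have "y = (0, 0)" using b(2) unfolding Hop_def by simp
          then show ?thesis by blast
        qed
      qed
      have ob: "finite (gg ` Pas B m)" "card (gg ` Pas B m) \<le> Suc (w * w) ^ k * w" using out_bound[OF w] by auto
      have "finite (insert (0, 0) (gg ` Pas B m))" using ob by simp
      moreover have "card (insert (0, 0) (gg ` Pas B m)) \<le> Suc (Suc (w * w) ^ k * w)"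
        using ob card_insert_le_m1 by (simp add: card_insert_if)
      ultimately show "finite (op_image Hop B \<inter> line m) \<and> card (op_image Hop B \<inter> line m) \<le> Suc (Suc (w * w) ^ k * w)"
        using sub by (meson card_mono finite_subset le_trans)
    qed
    then show "op_image Hop B \<in> idealI" unfolding idealI_def finite_width_def by blast
  qed
  then show ?thesis using Hop_op unfolding clone_of_ideal_def by simp
qed

end



lemma g_in_D:
  assumes D: "is_clone D" and CI: "clone_of_ideal idealI \<subseteq> D"
    and RJall: "\<And>r. is_op r \<Longrightarrow> (\<exists>S\<in>idealJ. \<forall>x. snd r x \<in> S) \<Longrightarrow> r \<in> D"
    and g: "g \<in> clone_of_ideal idealJ"
  shows "g \<in> D"
proof -
  obtain k gg where kg: "g = (k, gg)" by (cases g)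
  have opg: "is_op (k, gg)" using g kg unfolding clone_of_ideal_def by simp
  have gJ: "\<forall>A\<in>idealJ. op_image (k, gg) A \<in> idealJ" using g kg unfolding clone_of_ideal_def by simp
  interpret GJ gg k using gJ by unfold_locales
  have k1: "1 \<le> k" using opg unfolding is_op_def by simp
  have ggagree: "\<And>a b. \<forall>i<k. a i = b i \<Longrightarrow> gg a = gg b" using opg unfolding is_op_def by simp
  have ggt: "\<And>x. gg (trunc x) = gg x"
  proof -
    fix x :: "nat \<Rightarrow> pt"
    have "\<forall>i<k. trunc x i = x i" unfolding trunc_def by simp
    then show "gg (trunc x) = gg x" by (rule ggagree)
  qed
  define Gs :: "nat \<Rightarrow> op" where "Gs = (\<lambda>i. if i < k then proj k i else (k, \<lambda>x. code (i - k) (trunc x)))"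
  have HD: "Hop \<in> D" using Hop_I CI by blast
  have GsD: "\<forall>i<fst Hop. Gs i \<in> D \<and> fst (Gs i) = k"
  proof (intro allI impI)
    fix i assume i: "i < fst Hop"
    show "Gs i \<in> D \<and> fst (Gs i) = k"
    proof (cases "i < k")
      case True
      have "proj k i \<in> D" using D k1 True unfolding is_clone_def by blast
      moreover have "fst (proj k i) = k" unfolding proj_def by simp
      ultimately show ?thesis unfolding Gs_def using True by simp
    next
      case False
      define s where "s = i - k"
      have Gi: "Gs i = (k, \<lambda>x. code s (trunc x))" unfolding Gs_def s_def using False by simp
      have op: "is_op (k, \<lambda>x. code s (trunc x))"
        unfolding is_op_def
      proof (intro conjI allI impI)
        show "1 \<le> fst (k, \<lambda>x. code s (trunc x))" using k1 by simp
        fix a b :: "nat \<Rightarrow> pt" assume ab: "\<forall>i<fst (k, \<lambda>x. code s (trunc x)). a i = b i"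
        have "trunc a = trunc b" unfolding trunc_def using ab by auto
        then show "snd (k, \<lambda>x. code s (trunc x)) a = snd (k, \<lambda>x. code s (trunc x)) b" by simp
      qed
      have "\<forall>x. snd (k, \<lambda>x. code s (trunc x)) x \<in> range (code s)" by simp
      then have "\<exists>S\<in>idealJ. \<forall>x. snd (k, \<lambda>x. code s (trunc x)) x \<in> S" using code_J[of s] by blast
      then have "(k, \<lambda>x. code s (trunc x)) \<in> D" using RJall op by blast
      then show ?thesis unfolding Gi by simp
    qed
  qed
  have cD: "comp_op Hop k Gs \<in> D" using clone_comp[OF D HD k1 GsD] .
  have "comp_op Hop k Gs = g"
  proof -
    have "snd (comp_op Hop k Gs) x = gg x" for x
    proof -
      define b where "b = (\<lambda>i. snd (Gs i) x)"
      have bi: "\<And>i. i < k \<Longrightarrow> b i = x i" unfolding b_def Gs_def proj_def by simp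
      have tb: "trunc b = trunc x" unfolding trunc_def using bi by auto
      have "\<forall>s\<le>k. b (k + s) = code s (trunc x)" unfolding b_def Gs_def by simp
      then have bs: "\<forall>s\<le>k. b (k + s) = code s (trunc b)" unfolding tb .
      have "snd (comp_op Hop k Gs) x = HF b" unfolding comp_op_def Hop_def b_def by simp
      also have "\<dots> = gg (trunc b)" unfolding HF_def using bs by (rule if_P)
      also have "\<dots> = gg x" unfolding tb by (rule ggt)
      finally show ?thesis .
    qed
    then have "snd (comp_op Hop k Gs) = gg" by (rule ext)
    moreover have "fst (comp_op Hop k Gs) = k" unfolding comp_op_def by simp
    ultimately show ?thesis unfolding kg by (simp add: prod_eq_iff)
  qed
  then show ?thesis using cD by simp
qed

theorem mainTheorem1:
  shows "is_clone (clone_of_ideal idealI) \<and> is_clone (clone_of_ideal idealJ)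
    \<and> clone_of_ideal idealI \<subset> clone_of_ideal idealJ
    \<and> \<not> (\<exists>D. is_clone D \<and> clone_of_ideal idealI \<subset> D \<and> D \<subset> clone_of_ideal idealJ)"
proof (intro conjI)
  show "is_clone (clone_of_ideal idealI)" by (rule is_clone_ideal[OF ideal_like_I])
  show "is_clone (clone_of_ideal idealJ)" by (rule is_clone_ideal[OF ideal_like_J])
  show "clone_of_ideal idealI \<subset> clone_of_ideal idealJ"
    using CI_sub_CJ uop_J uop_notI by blast
  show "\<not> (\<exists>D. is_clone D \<and> clone_of_ideal idealI \<subset> D \<and> D \<subset> clone_of_ideal idealJ)"
  proof
    assume "\<exists>D. is_clone D \<and> clone_of_ideal idealI \<subset> D \<and> D \<subset> clone_of_ideal idealJ"
    then obtain D where D: "is_clone D" and ID: "clone_of_ideal idealI \<subset> D" and DJ: "D \<subset> clone_of_ideal idealJ"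
      by blast
    obtain f where f: "f \<in> D" "f \<notin> clone_of_ideal idealI" using ID by blast
    have fJ: "f \<in> clone_of_ideal idealJ" using f(1) DJ by blast
    have opf: "is_op f" using fJ unfolding clone_of_ideal_def by simp
    obtain A where A: "A \<in> idealI" "op_image f A \<notin> idealI"
      using f(2) opf unfolding clone_of_ideal_def by blast
    have AJ: "A \<in> idealJ" using A(1) I_sub_J by blast
    have RJf: "op_image f A \<in> idealJ" using fJ AJ unfolding clone_of_ideal_def by blast
    have CI: "clone_of_ideal idealI \<subseteq> D" using ID by blast
    have RJall: "\<And>r. is_op r \<Longrightarrow> (\<exists>S\<in>idealJ. \<forall>x. snd r x \<in> S) \<Longrightarrow> r \<in> D"
    proof -
      fix r :: op assume r: "is_op r" and "\<exists>S\<in>idealJ. \<forall>x. snd r x \<in> S"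
      then obtain S where S: "S \<in> idealJ" "\<forall>x. snd r x \<in> S" by blast
      show "r \<in> D" by (rule RJ[OF D CI f(1) opf A(1) RJf A(2) r S(1) S(2)])
    qed
    have "clone_of_ideal idealJ \<subseteq> D"
    proof
      fix g assume gJ: "g \<in> clone_of_ideal idealJ"
      show "g \<in> D"
      proof (rule g_in_D[OF D CI])
        show "\<And>r. is_op r \<Longrightarrow> (\<exists>S\<in>idealJ. \<forall>x. snd r x \<in> S) \<Longrightarrow> r \<in> D" by (rule RJall)
        show "g \<in> clone_of_ideal idealJ" by (rule gJ)
      qed
    qed
    then show False using DJ by blast
  qed
qed


end
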